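(* Let $\check p>0$, $\check\alpha>0$, $\gamma\ge0$. For all $x>0$ and $T>0$, \[ \tilde u(x,T)-\mathbb E^x\Big[\mathbf 1_{\{\theta\ge T\}}\Big(\int_T^\theta e^{-rt}\check p\,dt+e^{-r\theta}\check\alpha\Big)\Big]\le\bar u(x,T)\le\tilde u(x,T)+\mathbb E^x\big[\mathbf 1_{\{\theta\ge T\}}e^{-rT}\gamma\big]. \]
   Context: Let $X$ be a spectrally negative Lévy process (no positive jumps, not the negative of a subordinator, Lévy measure without atoms), $\mathbb P^x$ the law with $X_0=x$, $\mathbb E^x$ its expectation, $\mathbb F$ the filtration generated by $X$; $r>0$ fixed with $\log\mathbb E^0[e^{X_1}]=r$. Let $\theta:=\inf\{t\ge0:X_t\le0\}$ ($\inf\emptyset=\infty$, $e^{-r\infty}=0$). $\mathcal S$ is the set of $\mathbb F$-stopping times $\tau\le\theta$ a.s., and for $T>0$, $\mathcal S_T$ the set of $\mathbb F$-stopping times $\tau\le\theta\wedge T$ a.s. Define $u(x):=\sup_{\tau\in\mathcal S}\mathbb E^x\big[\mathbf 1_{\{\tau<\infty\}}\big(-\int_\tau^\theta e^{-rt}\check p\,dt-e^{-r\tau}\gamma\mathbf 1_{\{\tau<\theta\}}+e^{-r\theta}\check\alpha\mathbf 1_{\{\tau<\theta\}}\big)\big]$, $\bar u(x,T):=\sup_{\tau\in\mathcal S_T}\mathbb E^x\big[-\int_\tau^{\theta\wedge T}e^{-rt}\check p\,dt-e^{-r\tau}\gamma\mathbf 1_{\{\tau<\theta\wedge T\}}+e^{-r\theta}\check\alpha\mathbf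 1_{\{\tau<\theta<T\}}\big]$, and $\tilde u(x,T):=u(x)+\mathbb E^x\big[\mathbf 1_{\{\theta\ge T\}}\int_T^\theta e^{-rt}\check p\,dt\big]$. *)

theory Defs
  imports "HOL-Probability.Probability"
begin

text \<open>The process X under P^x is realised as X_t = x + L_t, where L is a
  Levy process started at 0 on a probability space M (L is X under P^0).
  Time is ennreal so that stopping times may take the value infinity.\<close>

definition left_lim :: "(real \<Rightarrow> 'a \<Rightarrow> real) \<Rightarrow> 'a \<Rightarrow> real \<Rightarrow> real" where
  "left_lim L \<omega> t = Lim (at_left t) (\<lambda>s. L s \<omega>)"

definition jump :: "(real \<Rightarrow> 'a \<Rightarrow> real) \<Rightarrow> 'a \<Rightarrow> real \<Rightarrow> real" where
  "jump L \<omega> t = L t \<omega> - left_lim L \<omega> t"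

definition cadlag_paths :: "'a measure \<Rightarrow> (real \<Rightarrow> 'a \<Rightarrow> real) \<Rightarrow> bool" where
  "cadlag_paths M L \<longleftrightarrow> (\<forall>\<omega>\<in>space M.
      (\<forall>t\<ge>0. continuous (at_right t) (\<lambda>s. L s \<omega>)) \<and>
      (\<forall>t>0. \<exists>l. ((\<lambda>s. L s \<omega>) \<longlongrightarrow> l) (at_left t)))"

definition levy_process :: "'a measure \<Rightarrow> (real \<Rightarrow> 'a \<Rightarrow> real) \<Rightarrow> bool" where
  "levy_process M L \<longleftrightarrow>
     prob_space M \<and>
     (\<forall>t. L t \<in> borel_measurable M) \<and>
     (\<forall>\<omega>\<in>space M. L 0 \<omega> = 0) \<and>
     cadlag_paths M L \<and>
     (\<forall>(n::nat) (t::nat \<Rightarrow> real). 0 \<le> t 0 \<longrightarrow> strict_mono t \<longrightarrow>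
        prob_space.indep_vars M (\<lambda>_. borel) (\<lambda>i \<omega>. L (t (Suc i)) \<omega> - L (t i) \<omega>) {..<n}) \<and>
     (\<forall>s t. 0 \<le> s \<longrightarrow> 0 \<le> t \<longrightarrow>
        distr M borel (\<lambda>\<omega>. L (s + t) \<omega> - L s \<omega>) = distr M borel (L t))"

definition levy_measure :: "'a measure \<Rightarrow> (real \<Rightarrow> 'a \<Rightarrow> real) \<Rightarrow> real set \<Rightarrow> ennreal" where
  "levy_measure M L B = (\<integral>\<^sup>+ \<omega>. emeasure (count_space UNIV)
      {t \<in> {0<..1}. jump L \<omega> t \<noteq> 0 \<and> jump L \<omega> t \<in> B} \<partial>M)"

definition spectrally_negative_levy :: "'a measure \<Rightarrow> (real \<Rightarrow> 'a \<Rightarrow> real) \<Rightarrow> bool" where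
  "spectrally_negative_levy M L \<longleftrightarrow>
     levy_process M L \<and>
     \<comment> \<open>no positive jumps\<close>
     (\<forall>\<omega>\<in>space M. \<forall>t>0. jump L \<omega> t \<le> 0) \<and>
     \<comment> \<open>not the negative of a subordinator (i.e. paths not a.s. nonincreasing)\<close>
     \<not> (AE \<omega> in M. antimono_on {0..} (\<lambda>t. L t \<omega>)) \<and>
     \<comment> \<open>Levy measure without atoms\<close>
     (\<forall>a. levy_measure M L {a} = 0)"

text \<open>Natural filtration generated by the process (equivalently by X = x + L).\<close>
definition nat_filtration :: "'a measure \<Rightarrow> (real \<Rightarrow> 'a \<Rightarrow> real) \<Rightarrow> ennreal \<Rightarrow> 'a measure" where
  "nat_filtration M L t = sigma (space M)
     {L s -` B \<inter> space M | s B. 0 \<le> s \<and> ennreal s \<le> t \<and> B \<in> sets borel}"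

definition ruin_time :: "(real \<Rightarrow> 'a \<Rightarrow> real) \<Rightarrow> real \<Rightarrow> 'a \<Rightarrow> ennreal" where
  "ruin_time L x \<omega> = Inf (ennreal ` {t. 0 \<le> t \<and> x + L t \<omega> \<le> 0})"

definition disc :: "real \<Rightarrow> ennreal \<Rightarrow> real" where
  "disc r t = (if t = \<infinity> then 0 else exp (- r * enn2real t))"

definition run_int :: "real \<Rightarrow> real \<Rightarrow> ennreal \<Rightarrow> ennreal \<Rightarrow> real" where
  "run_int r p a b = (LINT t:{t. 0 \<le> t \<and> a \<le> ennreal t \<and> ennreal t < b}|lborel. exp (- r * t) * p)"

definition ind :: "bool \<Rightarrow> real" where
  "ind P = (if P then 1 else 0)"

definition stop_set :: "'a measure \<Rightarrow> (real \<Rightarrow> 'a \<Rightarrow> real) \<Rightarrow> real \<Rightarrow> ('a \<Rightarrow> ennreal) set" where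
  "stop_set M L x = {\<tau>. stopping_time (nat_filtration M L) \<tau> \<and>
                         (AE \<omega> in M. \<tau> \<omega> \<le> ruin_time L x \<omega>)}"

definition stop_set_T :: "'a measure \<Rightarrow> (real \<Rightarrow> 'a \<Rightarrow> real) \<Rightarrow> real \<Rightarrow> real \<Rightarrow> ('a \<Rightarrow> ennreal) set" where
  "stop_set_T M L x T = {\<tau>. stopping_time (nat_filtration M L) \<tau> \<and>
                         (AE \<omega> in M. \<tau> \<omega> \<le> min (ruin_time L x \<omega>) (ennreal T))}"

definition u_val :: "'a measure \<Rightarrow> (real \<Rightarrow> 'a \<Rightarrow> real) \<Rightarrow> real \<Rightarrow> real \<Rightarrow> real \<Rightarrow> real \<Rightarrow> real \<Rightarrow> real" where
  "u_val M L r p \<gamma> \<alpha> x = (SUP \<tau> \<in> stop_set M L x.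
     (\<integral>\<omega>. ind (\<tau> \<omega> < \<infinity>) *
        (- run_int r p (\<tau> \<omega>) (ruin_time L x \<omega>)
         - disc r (\<tau> \<omega>) * \<gamma> * ind (\<tau> \<omega> < ruin_time L x \<omega>)
         + disc r (ruin_time L x \<omega>) * \<alpha> * ind (\<tau> \<omega> < ruin_time L x \<omega>)) \<partial>M))"

definition u_bar :: "'a measure \<Rightarrow> (real \<Rightarrow> 'a \<Rightarrow> real) \<Rightarrow> real \<Rightarrow> real \<Rightarrow> real \<Rightarrow> real \<Rightarrow> real \<Rightarrow> real \<Rightarrow> real" where
  "u_bar M L r p \<gamma> \<alpha> x T = (SUP \<tau> \<in> stop_set_T M L x T.
     (\<integral>\<omega>. - run_int r p (\<tau> \<omega>) (min (ruin_time L x \<omega>) (ennreal T))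
         - disc r (\<tau> \<omega>) * \<gamma> * ind (\<tau> \<omega> < min (ruin_time L x \<omega>) (ennreal T))
         + disc r (ruin_time L x \<omega>) * \<alpha> *
             ind (\<tau> \<omega> < ruin_time L x \<omega> \<and> ruin_time L x \<omega> < ennreal T) \<partial>M))"

definition u_tilde :: "'a measure \<Rightarrow> (real \<Rightarrow> 'a \<Rightarrow> real) \<Rightarrow> real \<Rightarrow> real \<Rightarrow> real \<Rightarrow> real \<Rightarrow> real \<Rightarrow> real \<Rightarrow> real" where
  "u_tilde M L r p \<gamma> \<alpha> x T = u_val M L r p \<gamma> \<alpha> x +
     (\<integral>\<omega>. ind (ruin_time L x \<omega> \<ge> ennreal T) * run_int r p (ennreal T) (ruin_time L x \<omega>) \<partial>M)"

end

theory Submission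
  imports Defs
begin

lemma disc_ennreal: "0 \<le> a \<Longrightarrow> disc r (ennreal a) = exp (- r * a)"
  by (simp add: disc_def)

lemma disc_top[simp]: "disc r \<infinity> = 0"
  by (simp add: disc_def)

lemma exp_deriv_aux: "((\<lambda>t. - (p / r) * exp (- r * t)) has_real_derivative exp (- r * t) * p) (at t within S)"
  if "r > 0" for r p t :: real and S
  using that by (auto intro!: derivative_eq_intros simp: field_simps)

lemma run_int_closed:
  assumes r: "r > 0" and p: "p > 0"
  shows "run_int r p a b = p / r * max 0 (disc r a - disc r b)"
proof (cases a)
  case top
  then have S: "{t. 0 \<le> t \<and> a \<le> ennreal t \<and> ennreal t < b} = {}"
    by (auto simp: top_unique)
  have "run_int r p a b = 0"
    unfolding run_int_def S by (simp add: set_lebesgue_integral_def)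
  then show ?thesis
    using top disc_def by simp
next
  case (real a')
  note a' = real
  show ?thesis
  proof (cases b)
    case top
    have S: "{t. 0 \<le> t \<and> a \<le> ennreal t \<and> ennreal t < b} = {a'..}"
      using a' top by auto
    have "run_int r p a b = (LINT t:{a'..}|lborel. exp (- r * t) * p)"
      by (simp add: run_int_def S)
    also have "\<dots> = enn2real (\<integral>\<^sup>+ t. ennreal (indicator {a'..} t *\<^sub>R (exp (- r * t) * p)) \<partial>lborel)"
      unfolding set_lebesgue_integral_def
      using p by (intro integral_eq_nn_integral) auto
    also have "(\<integral>\<^sup>+ t. ennreal (indicator {a'..} t *\<^sub>R (exp (- r * t) * p)) \<partial>lborel)
        = (\<integral>\<^sup>+ t. ennreal (exp (- r * t) * p) * indicator {a'..} t \<partial>lborel)"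
      by (intro nn_integral_cong) (auto simp: indicator_def)
    also have "\<dots> = ennreal (0 - (- (p / r) * exp (- r * a')))"
    proof (rule nn_integral_FTC_atLeast)
      show "((\<lambda>t. - (p / r) * exp (- r * t)) \<longlongrightarrow> 0) at_top"
        using r by real_asymp
    qed (use r p exp_deriv_aux in auto)
    finally show ?thesis
      using a' top r p by (simp add: disc_def)
  next
    case (real b')
    show ?thesis
    proof (cases "a' < b'")
      case False
      then have S: "{t. 0 \<le> t \<and> a \<le> ennreal t \<and> ennreal t < b} = {}"
        using a' real by (auto simp: ennreal_less_iff)
      have "exp (- r * a') \<le> exp (- r * b')"
        using False r by (simp add: mult_left_mono)
      then show ?thesis
        using a' real S by (simp add: run_int_def disc_def set_lebesgue_integral_def)
    next
      case True
      have S: "{t. 0 \<le> t \<and> a \<le> ennreal t \<and> ennreal t < b} = {a'..<b'}"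
        using a' real True by (auto simp: ennreal_less_iff)
      have "run_int r p a b = (LINT t:{a'..<b'}|lborel. exp (- r * t) * p)"
        by (simp add: run_int_def S)
      also have "\<dots> = (LINT t:{a'..b'}|lborel. exp (- r * t) * p)"
        by (rule set_integral_discrete_difference[where X="{b'}"]) auto
      also have "\<dots> = (- (p / r) * exp (- r * b')) - (- (p / r) * exp (- r * a'))"
        unfolding set_lebesgue_integral_def
      proof (rule integral_FTC_atLeastAtMost)
        show "a' \<le> b'" using True by simp
        show "((\<lambda>t. - (p / r) * exp (- r * t)) has_vector_derivative exp (- r * t) * p) (at t within {a'..b'})" for t
          using exp_deriv_aux[OF r] has_real_derivative_iff_has_vector_derivative by blast
        show "continuous_on {a'..b'} (\<lambda>t. exp (- r * t) * p)"
          by (intro continuous_intros)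
      qed
      finally show ?thesis
        using a' real r p True by (simp add: disc_def field_simps)
    qed
  qed
qed

lemma lsc_nbhd:
  fixes f :: "real \<Rightarrow> real"
  assumes rc: "\<forall>t\<ge>0. continuous (at_right t) f"
    and lj: "\<forall>t>0. \<exists>l. (f \<longlongrightarrow> l) (at_left t) \<and> f t \<le> l"
    and t: "0 \<le> t" and y: "y < f t"
  shows "\<exists>\<delta>>0. \<forall>u\<ge>0. \<bar>u - t\<bar> < \<delta> \<longrightarrow> y < f u"
proof -
  have "(f \<longlongrightarrow> f t) (at_right t)"
    using rc t by (simp add: continuous_within)
  then have "eventually (\<lambda>u. y < f u) (at_right t)"
    using y by (rule order_tendstoD(1))
  then have "\<exists>b>t. \<forall>u>t. u < b \<longrightarrow> y < f u"
    by (subst (asm) eventually_at_right[of t "t+1"]) simp_all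
  then obtain b where b: "b > t" "\<And>u. t < u \<Longrightarrow> u < b \<Longrightarrow> y < f u"
    by blast
  show ?thesis
  proof (cases "t = 0")
    case True
    show ?thesis
    proof (intro exI[of _ "b - t"] conjI allI impI)
      show "0 < b - t" using b by simp
      fix u :: real assume u: "0 \<le> u" "\<bar>u - t\<bar> < b - t"
      show "y < f u"
      proof (cases "u = t")
        case True then show ?thesis using y by simp
      next
        case False
        then have "t < u" "u < b" using u \<open>t = 0\<close> by linarith+
        then show ?thesis by (rule b(2))
      qed
    qed
  next
    case False
    then have tpos: "t > 0" using t by simp
    obtain l where l: "(f \<longlongrightarrow> l) (at_left t)" "f t \<le> l"
      using lj tpos by blast
    then have "eventually (\<lambda>u. y < f u) (at_left t)"
      using order_tendstoD(1)[OF l(1), of y] y l(2) by simp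
    then have "\<exists>b<t. \<forall>u>b. u < t \<longrightarrow> y < f u"
      by (subst (asm) eventually_at_left[of "t - 1" t]) simp_all
    then obtain a where a: "a < t" "\<And>u. a < u \<Longrightarrow> u < t \<Longrightarrow> y < f u"
      by blast
    show ?thesis
    proof (intro exI[of _ "min (b - t) (t - a)"] conjI allI impI)
      show "0 < min (b - t) (t - a)" using a b by simp
      fix u :: real assume u: "0 \<le> u" "\<bar>u - t\<bar> < min (b - t) (t - a)"
      show "y < f u"
      proof (cases "u = t")
        case True then show ?thesis using y by simp
      next
        case False
        show ?thesis
        proof (cases "u < t")
          case True
          then have "a < u" using u by linarith
          then show ?thesis using a(2) True by blast
        next
          case False
          then have "t < u" "u < b" using u \<open>u \<noteq> t\<close> by linarith+
          then show ?thesis by (rule b(2))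
        qed
      qed
    qed
  qed
qed
lemma closed_sublevel:
  fixes f :: "real \<Rightarrow> real"
  assumes rc: "\<forall>t\<ge>0. continuous (at_right t) f"
    and lj: "\<forall>t>0. \<exists>l. (f \<longlongrightarrow> l) (at_left t) \<and> f t \<le> l"
  shows "closed {t \<in> {0..s}. f t \<le> y}"
  unfolding closed_sequential_limits
proof (intro allI impI, elim conjE)
  fix X l assume X: "\<forall>n. X n \<in> {t \<in> {0..s}. f t \<le> y}" and lim: "X \<longlonglongrightarrow> l"
  have "l \<in> {0..s}"
    using closed_sequentially[OF closed_atLeastAtMost _ lim] X by auto
  moreover have "f l \<le> y"
  proof (rule ccontr)
    assume "\<not> f l \<le> y"
    then obtain \<delta> where d: "\<delta> > 0" "\<forall>u\<ge>0. \<bar>u - l\<bar> < \<delta> \<longrightarrow> y < f u"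
      using lsc_nbhd[OF rc lj, of l y] \<open>l \<in> {0..s}\<close> by auto
    obtain N where "\<forall>n\<ge>N. dist (X n) l < \<delta>"
      using lim d(1) by (auto simp: lim_sequentially)
    then have "\<bar>X N - l\<bar> < \<delta>" by (simp add: dist_real_def)
    then show False using d X[rule_format, of N] by force
  qed
  ultimately show "l \<in> {t \<in> {0..s}. f t \<le> y}" by simp
qed

lemma attain_level:
  fixes f :: "real \<Rightarrow> real"
  assumes rc: "\<forall>t\<ge>0. continuous (at_right t) f"
    and lj: "\<forall>t>0. \<exists>l. (f \<longlongrightarrow> l) (at_left t) \<and> f t \<le> l"
    and H: "\<forall>n::nat. \<exists>d. 0 \<le> d \<and> d \<le> s \<and> f d < c + 1 / (real n + 1)"
  shows "\<exists>t\<in>{0..s}. f t \<le> c"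
proof -
  define C where "C n = {t \<in> {0..s}. f t \<le> c + 1 / (real n + 1)}" for n :: nat
  have "{0..s} \<inter> \<Inter>(range C) \<noteq> {}"
  proof (rule compact_imp_fip)
    show "closed T" if "T \<in> range C" for T
      using that closed_sublevel[OF rc lj] by (auto simp: C_def)
    fix F' assume F': "finite F'" "F' \<subseteq> range C"
    then obtain N where N: "finite N" "F' = C ` N"
      by (meson finite_subset_image subset_UNIV)
    define m where "m = (if N = {} then 0 else Max N)"
    obtain d where d: "0 \<le> d" "d \<le> s" "f d < c + 1 / (real m + 1)"
      using H by blast
    have "d \<in> C n" if "n \<in> N" for n
    proof -
      have "n \<le> m" using that N by (auto simp: m_def)
      then have "1 / (real m + 1) \<le> 1 / (real n + 1)"
        by (intro divide_left_mono) auto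
      then show ?thesis using d by (auto simp: C_def)
    qed
    then show "{0..s} \<inter> \<Inter>F' \<noteq> {}"
      using d N by auto
  qed auto
  then obtain t where t: "t \<in> {0..s}" "\<And>n. t \<in> C n" by blast
  have "f t \<le> c"
  proof (rule field_le_epsilon)
    fix e :: real assume "0 < e"
    then obtain n where "inverse (real (Suc n)) < e"
      using reals_Archimedean by blast
    then have "1 / (real n + 1) < e" by (simp add: field_simps)
    then show "f t \<le> c + e" using t(2)[of n] by (auto simp: C_def)
  qed
  then show ?thesis using t by blast
qed

lemma level_iff_rat:
  fixes f :: "real \<Rightarrow> real"
  assumes rc: "\<forall>t\<ge>0. continuous (at_right t) f"
    and lj: "\<forall>t>0. \<exists>l. (f \<longlongrightarrow> l) (at_left t) \<and> f t \<le> l"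
    and s: "0 \<le> s"
  shows "(\<exists>t\<in>{0..s}. f t \<le> c) \<longleftrightarrow>
    (\<forall>n::nat. f s < c + 1 / (real n + 1) \<or>
       (\<exists>q::rat. 0 \<le> real_of_rat q \<and> real_of_rat q \<le> s \<and> f (real_of_rat q) < c + 1 / (real n + 1)))"
proof
  assume "\<exists>t\<in>{0..s}. f t \<le> c"
  then obtain t where t: "0 \<le> t" "t \<le> s" "f t \<le> c" by auto
  show "\<forall>n::nat. f s < c + 1 / (real n + 1) \<or>
       (\<exists>q::rat. 0 \<le> real_of_rat q \<and> real_of_rat q \<le> s \<and> f (real_of_rat q) < c + 1 / (real n + 1))"
  proof
    fix n :: nat
    define e where "e = 1 / (real n + 1)"
    have e: "e > 0" by (simp add: e_def)
    show "f s < c + 1 / (real n + 1) \<or>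
       (\<exists>q::rat. 0 \<le> real_of_rat q \<and> real_of_rat q \<le> s \<and> f (real_of_rat q) < c + 1 / (real n + 1))"
    proof (cases "t = s")
      case True then show ?thesis using t e by (auto simp: e_def[symmetric])
    next
      case False
      then have ts: "t < s" using t by simp
      have "(f \<longlongrightarrow> f t) (at_right t)"
        using rc t by (simp add: continuous_within)
      then have "eventually (\<lambda>u. f u < c + e) (at_right t)"
        using t e by (intro order_tendstoD(2)) auto
      then have "\<exists>b>t. \<forall>u>t. u < b \<longrightarrow> f u < c + e"
        by (subst (asm) eventually_at_right[of t "t+1"]) simp_all
      then obtain b where b: "b > t" "\<forall>u>t. u < b \<longrightarrow> f u < c + e"
        by blast
      obtain q where q: "q \<in> \<rat>" "t < q" "q < min b s"
        using Rats_dense_in_real[of t "min b s"] b ts by auto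
      then obtain q' where q': "q = real_of_rat q'" by (auto elim: Rats_cases)
      have 1: "0 \<le> real_of_rat q'" "real_of_rat q' \<le> s" using q q' t by linarith+
      have 2: "f (real_of_rat q') < c + 1 / (real n + 1)"
        using b q q' by (auto simp: e_def)
      show ?thesis using 1 2 by blast
    qed
  qed
next
  assume R: "\<forall>n::nat. f s < c + 1 / (real n + 1) \<or>
       (\<exists>q::rat. 0 \<le> real_of_rat q \<and> real_of_rat q \<le> s \<and> f (real_of_rat q) < c + 1 / (real n + 1))"
  have "\<forall>n::nat. \<exists>d. 0 \<le> d \<and> d \<le> s \<and> f d < c + 1 / (real n + 1)"
    using R s by blast
  then show "\<exists>t\<in>{0..s}. f t \<le> c"
    by (rule attain_level[OF rc lj])
qed


lemma ruin_le_iff: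
  fixes f :: "real \<Rightarrow> real"
  assumes rc: "\<forall>t\<ge>0. continuous (at_right t) f"
    and lj: "\<forall>t>0. \<exists>l. (f \<longlongrightarrow> l) (at_left t) \<and> f t \<le> l"
    and s: "0 \<le> s"
  shows "Inf (ennreal ` {t. 0 \<le> t \<and> x + f t \<le> 0}) \<le> ennreal s \<longleftrightarrow> (\<exists>t\<in>{0..s}. f t \<le> - x)"
proof
  assume "\<exists>t\<in>{0..s}. f t \<le> - x"
  then obtain t where t: "0 \<le> t" "t \<le> s" "f t \<le> - x" by auto
  have "Inf (ennreal ` {t. 0 \<le> t \<and> x + f t \<le> 0}) \<le> ennreal t"
    using t by (intro Inf_lower) auto
  also have "\<dots> \<le> ennreal s" using t by (intro ennreal_leI) auto
  finally show "Inf (ennreal ` {t. 0 \<le> t \<and> x + f t \<le> 0}) \<le> ennreal s" .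
next
  define A where "A = {t. 0 \<le> t \<and> x + f t \<le> 0}"
  assume H: "Inf (ennreal ` {t. 0 \<le> t \<and> x + f t \<le> 0}) \<le> ennreal s"
  have "ennreal s < ennreal (s + 1)" using s by (intro ennreal_lessI) auto
  then have "Inf (ennreal ` A) < ennreal (s + 1)" using H by (simp add: A_def)
  then obtain a where a: "a \<in> A" "ennreal a < ennreal (s + 1)"
    by (auto simp: Inf_less_iff)
  then have a1: "a < s + 1" using a by (auto simp: A_def ennreal_less_iff)
  define C where "C = {t \<in> {0..s+1}. f t \<le> - x}"
  have Ccl: "closed C" unfolding C_def by (rule closed_sublevel[OF rc lj])
  have aC: "a \<in> C" using a a1 by (auto simp: A_def C_def)
  have bdd: "bdd_below C" by (auto simp: C_def bdd_below_def)
  define m where "m = Inf C"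
  have mC: "m \<in> C" unfolding m_def using Ccl aC bdd closed_contains_Inf by blast
  have "ennreal m \<le> Inf (ennreal ` A)"
  proof (rule Inf_greatest)
    fix z assume "z \<in> ennreal ` A"
    then obtain a' where a': "a' \<in> A" "z = ennreal a'" by auto
    have "m \<le> a'"
    proof (cases "a' \<le> s + 1")
      case True
      then have "a' \<in> C" using a' by (auto simp: A_def C_def)
      then show ?thesis unfolding m_def using bdd by (rule cInf_lower)
    next
      case False then show ?thesis using mC by (auto simp: C_def)
    qed
    then show "ennreal m \<le> z" using a' by (auto intro: ennreal_leI)
  qed
  then have "ennreal m \<le> ennreal s" using H by (simp add: A_def)
  then have "m \<le> s" using s by simp
  then show "\<exists>t\<in>{0..s}. f t \<le> - x" using mC by (auto simp: C_def)
qed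

lemma path_props:
  assumes sn: "spectrally_negative_levy M L" and w: "\<omega> \<in> space M"
  shows "\<forall>t\<ge>0. continuous (at_right t) (\<lambda>s. L s \<omega>)"
    and "\<forall>t>0. \<exists>l. ((\<lambda>s. L s \<omega>) \<longlongrightarrow> l) (at_left t) \<and> L t \<omega> \<le> l"
proof -
  have cad: "cadlag_paths M L" and jmp: "\<forall>t>0. jump L \<omega> t \<le> 0"
    using sn w by (auto simp: spectrally_negative_levy_def levy_process_def)
  show "\<forall>t\<ge>0. continuous (at_right t) (\<lambda>s. L s \<omega>)"
    using cad w by (auto simp: cadlag_paths_def)
  show "\<forall>t>0. \<exists>l. ((\<lambda>s. L s \<omega>) \<longlongrightarrow> l) (at_left t) \<and> L t \<omega> \<le> l"
  proof (intro allI impI)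
    fix t :: real assume t: "t > 0"
    have "\<exists>l. ((\<lambda>s. L s \<omega>) \<longlongrightarrow> l) (at_left t)"
      using cad w t unfolding cadlag_paths_def by blast
    then obtain l where l: "((\<lambda>s. L s \<omega>) \<longlongrightarrow> l) (at_left t)" by blast
    then have "Lim (at_left t) (\<lambda>s. L s \<omega>) = l"
      by (intro tendsto_Lim) auto
    then have "L t \<omega> \<le> l" using jmp t by (auto simp: jump_def left_lim_def)
    then show "\<exists>l. ((\<lambda>s. L s \<omega>) \<longlongrightarrow> l) (at_left t) \<and> L t \<omega> \<le> l" using l by blast
  qed
qed

lemma ruin_measurable:
  assumes sn: "spectrally_negative_levy M L"
  shows "ruin_time L x \<in> borel_measurable M"
proof (rule borel_measurableI_le)
  have Lm[measurable]: "L t \<in> borel_measurable M" for t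
    using sn by (auto simp: spectrally_negative_levy_def levy_process_def)
  fix y :: ennreal
  show "{\<omega> \<in> space M. ruin_time L x \<omega> \<le> y} \<in> sets M"
  proof (cases y)
    case top then show ?thesis by simp
  next
    case (real s)
    have "{\<omega> \<in> space M. ruin_time L x \<omega> \<le> y} =
      {\<omega> \<in> space M. \<forall>n::nat. L s \<omega> < - x + 1 / (real n + 1) \<or>
       (\<exists>q::rat. 0 \<le> real_of_rat q \<and> real_of_rat q \<le> s \<and> L (real_of_rat q) \<omega> < - x + 1 / (real n + 1))}"
    proof (intro Collect_cong conj_cong refl)
      fix \<omega> assume w: "\<omega> \<in> space M"
      show "ruin_time L x \<omega> \<le> y \<longleftrightarrow> (\<forall>n::nat. L s \<omega> < - x + 1 / (real n + 1) \<or>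
       (\<exists>q::rat. 0 \<le> real_of_rat q \<and> real_of_rat q \<le> s \<and> L (real_of_rat q) \<omega> < - x + 1 / (real n + 1)))"
        unfolding ruin_time_def real
        using ruin_le_iff[OF path_props[OF sn w] \<open>0 \<le> s\<close>, of x]
          level_iff_rat[OF path_props[OF sn w] \<open>0 \<le> s\<close>, of "- x"]
        by simp
    qed
    also have "\<dots> \<in> sets M" by measurable
    finally show ?thesis .
  qed
qed

lemma disc_nonneg: "0 \<le> disc r a" by (simp add: disc_def)
lemma disc_le1: "r \<ge> 0 \<Longrightarrow> disc r a \<le> 1" by (simp add: disc_def enn2real_nonneg)
lemma disc_mono: assumes "r \<ge> 0" "a \<le> b" shows "disc r b \<le> disc r a"
proof (cases "b = \<infinity>")
  case True then show ?thesis by (simp add: disc_def)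
next
  case False
  then have "a \<noteq> \<infinity>" using assms top_unique by auto
  moreover have "enn2real a \<le> enn2real b" using assms False by (intro enn2real_mono) (auto simp: top.not_eq_extremum)
  ultimately show ?thesis using False assms by (simp add: disc_def mult_left_mono)
qed

lemma ind_simps[simp]: "ind True = 1" "ind False = 0" by (simp_all add: ind_def)

lemma ptA:
  fixes s h :: ennreal and T r p \<alpha> \<gamma> :: real
  assumes r: "r > 0" and p: "p > 0" and a: "\<alpha> > 0" and g: "\<gamma> \<ge> 0" and sh: "s \<le> h"
  shows "ind (s < \<infinity>) * (- run_int r p s h - disc r s * \<gamma> * ind (s < h) + disc r h * \<alpha> * ind (s < h))
     - ind (ennreal T \<le> h) * disc r h * \<alpha>
    \<le> - run_int r p (min s (ennreal T)) (min h (ennreal T)) - disc r (min s (ennreal T)) * \<gamma> * ind (min s (ennreal T) < min h (ennreal T))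
       + disc r h * \<alpha> * ind (min s (ennreal T) < h \<and> h < ennreal T)"
proof (cases "s < ennreal T")
  case True
  then have st: "min s (ennreal T) = s" "s < \<infinity>" by (auto simp: top.not_eq_extremum order_less_le_trans)
  have m: "max 0 (disc r s - disc r (min h (ennreal T))) \<le> max 0 (disc r s - disc r h)"
    using disc_mono[of r "min h (ennreal T)" h] r by (auto simp: max_def)
  have R: "run_int r p s (min h (ennreal T)) \<le> run_int r p s h"
    using m r p by (simp add: run_int_closed divide_right_mono mult_left_mono)
  have I: "ind (s < min h (ennreal T)) = ind (s < h)" using True by simp
  have "ind (s < h) * disc r h * \<alpha> - ind (ennreal T \<le> h) * disc r h * \<alpha> \<le> disc r h * \<alpha> * ind (s < h \<and> h < ennreal T)"
    using disc_nonneg[of r h] a by (cases "s < h"; cases "h < ennreal T") (auto simp: not_less ind_def)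
  then show ?thesis using st R I by (simp add: algebra_simps)
next
  case False
  then have st: "min s (ennreal T) = ennreal T" "min h (ennreal T) = ennreal T" using sh by (auto simp: min_def)
  have R0: "run_int r p (ennreal T) (ennreal T) = 0" using r p by (simp add: run_int_closed)
  have Rn: "run_int r p s h \<ge> 0" using r p by (simp add: run_int_closed)
  have Th: "ennreal T \<le> h" using False sh by (simp add: not_less)
  have "ind (s < \<infinity>) * (- run_int r p s h - disc r s * \<gamma> * ind (s < h) + disc r h * \<alpha> * ind (s < h)) \<le> disc r h * \<alpha>"
    using Rn mult_nonneg_nonneg[OF disc_nonneg[of r s] g] mult_nonneg_nonneg[OF disc_nonneg[of r h] less_imp_le[OF a]]
    by (cases "s < \<infinity>"; cases "s < h") auto
  moreover have "- run_int r p (min s (ennreal T)) (min h (ennreal T)) - disc r (min s (ennreal T)) * \<gamma> * ind (min s (ennreal T) < min h (ennreal T))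
       + disc r h * \<alpha> * ind (min s (ennreal T) < h \<and> h < ennreal T) = 0"
    using st R0 Th by (auto simp: ind_def)
  moreover have "ind (ennreal T \<le> h) * disc r h * \<alpha> = disc r h * \<alpha>" using Th by simp
  ultimately show ?thesis by linarith
qed

lemma ptB:
  fixes s h :: ennreal and T r p \<alpha> \<gamma> :: real
  assumes r: "r > 0" and p: "p > 0" and a: "\<alpha> > 0" and g: "\<gamma> \<ge> 0" and sh: "s \<le> h" and sT: "s \<le> ennreal T"
    and T: "T > 0"
  shows "- run_int r p s (min h (ennreal T)) - disc r s * \<gamma> * ind (s < min h (ennreal T))
       + disc r h * \<alpha> * ind (s < h \<and> h < ennreal T)
    \<le> ind (s < \<infinity>) * (- run_int r p s h - disc r s * \<gamma> * ind (s < h) + disc r h * \<alpha> * ind (s < h))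
      + ind (ennreal T \<le> h) * run_int r p (ennreal T) h + ind (ennreal T \<le> h) * exp (- r * T) * \<gamma>"
proof -
  have sfin: "s < \<infinity>" using sT by (simp add: order_le_less_trans)
  show ?thesis
  proof (cases "h < ennreal T")
    case True
    then have "min h (ennreal T) = h" by simp
    moreover have "\<not> ennreal T \<le> h" using True by simp
    ultimately show ?thesis using sfin True by simp
  next
    case False
    then have hT: "min h (ennreal T) = ennreal T" "ennreal T \<le> h" by (auto simp: not_less)
    have add: "run_int r p s h = run_int r p s (ennreal T) + run_int r p (ennreal T) h"
      using disc_mono[OF _ sT, of r] disc_mono[OF _ hT(2), of r] r p
      by (simp add: run_int_closed algebra_simps)
    have dT: "disc r (ennreal T) = exp (- r * T)" using T by (simp add: disc_ennreal)
    have key: "- disc r s * \<gamma> * ind (s < ennreal T) \<le>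
       - disc r s * \<gamma> * ind (s < h) + disc r h * \<alpha> * ind (s < h) + exp (- r * T) * \<gamma>"
    proof (cases "s < ennreal T")
      case True
      then have "s < h" using hT by (simp add: order_less_le_trans)
      then show ?thesis using True disc_nonneg[of r h] a g by (simp add: mult_nonneg_nonneg)
    next
      case False
      then have sT': "s = ennreal T" using sT by simp
      show ?thesis
      proof (cases "s < h")
        case True then show ?thesis using False sT' dT disc_nonneg[of r h] a g by (simp add: mult_nonneg_nonneg)
      next
        case False then show ?thesis using \<open>\<not> s < ennreal T\<close> g by simp
      qed
    qed
    show ?thesis using hT sfin add key False by (simp add: algebra_simps)
  qed
qed

lemma disc_borel[measurable]: "disc r \<in> borel_measurable borel"
  unfolding disc_def[abs_def] by measurable

lemma ind_pred[measurable (raw)]: "Measurable.pred M P \<Longrightarrow> (\<lambda>x. ind (P x)) \<in> borel_measurable M"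
  unfolding ind_def by measurable

lemma run_int_bounds:
  assumes "r > 0" "p > 0"
  shows "0 \<le> run_int r p a b" "run_int r p a b \<le> p / r"
proof -
  have "max 0 (disc r a - disc r b) \<le> 1"
    using disc_le1[of r a] disc_nonneg[of r b] assms by auto
  then have "p / r * max 0 (disc r a - disc r b) \<le> p / r * 1"
    using assms by (intro mult_left_mono) auto
  then show "run_int r p a b \<le> p / r" using assms by (simp add: run_int_closed)
  show "0 \<le> run_int r p a b" using assms by (simp add: run_int_closed)
qed

lemma bounded_integrable:
  fixes f :: "'a \<Rightarrow> real"
  assumes "prob_space M" "f \<in> borel_measurable M" "\<And>\<omega>. \<omega> \<in> space M \<Longrightarrow> \<bar>f \<omega>\<bar> \<le> B"
  shows "integrable M f"
proof -
  interpret prob_space M by fact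
  show ?thesis
    by (rule integrable_const_bound[where B=B]) (use assms in auto)
qed

lemma integral_le_bound:
  fixes f :: "'a \<Rightarrow> real"
  assumes "prob_space M" "integrable M f" "\<And>\<omega>. \<omega> \<in> space M \<Longrightarrow> f \<omega> \<le> B"
  shows "integral\<^sup>L M f \<le> B"
proof -
  interpret prob_space M by fact
  have "integral\<^sup>L M f \<le> integral\<^sup>L M (\<lambda>_. B)"
    using assms by (intro integral_mono) auto
  then show ?thesis by (simp add: prob_space)
qed

lemma filt_props:
  assumes "\<And>t. L t \<in> borel_measurable M"
  shows "sets (nat_filtration M L t) \<subseteq> sets M" "space (nat_filtration M L t) = space M"
proof -
  have G: "{L s -` B \<inter> space M | s B. 0 \<le> s \<and> ennreal s \<le> t \<and> B \<in> sets borel} \<subseteq> sets M"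
    using assms by (auto intro: measurable_sets)
  then have G': "{L s -` B \<inter> space M | s B. 0 \<le> s \<and> ennreal s \<le> t \<and> B \<in> sets borel} \<subseteq> Pow (space M)"
    using sets.sets_into_space by blast
  show "sets (nat_filtration M L t) \<subseteq> sets M"
    unfolding nat_filtration_def sets_measure_of[OF G'] by (rule sets.sigma_sets_subset[OF G])
  show "space (nat_filtration M L t) = space M"
    unfolding nat_filtration_def by (simp add: space_measure_of_conv)
qed

theorem lemma5p3:
  fixes M :: "'a measure" and L :: "real \<Rightarrow> 'a \<Rightarrow> real"
    and r p \<alpha> \<gamma> x T :: real
  assumes "spectrally_negative_levy M L"
    and "integrable M (\<lambda>\<omega>. exp (L 1 \<omega>))"
    and "ln (\<integral>\<omega>. exp (L 1 \<omega>) \<partial>M) = r"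
    and "r > 0"
    and "p > 0" and "\<alpha> > 0" and "\<gamma> \<ge> 0"
    and "x > 0" and "T > 0"
  shows "u_tilde M L r p \<gamma> \<alpha> x T
           - (\<integral>\<omega>. ind (ruin_time L x \<omega> \<ge> ennreal T) *
                 (run_int r p (ennreal T) (ruin_time L x \<omega>) + disc r (ruin_time L x \<omega>) * \<alpha>) \<partial>M)
         \<le> u_bar M L r p \<gamma> \<alpha> x T \<and>
         u_bar M L r p \<gamma> \<alpha> x T
         \<le> u_tilde M L r p \<gamma> \<alpha> x T
           + (\<integral>\<omega>. ind (ruin_time L x \<omega> \<ge> ennreal T) * exp (- r * T) * \<gamma> \<partial>M)"
proof -
  note sn = assms(1)
  have r: "r > 0" and p: "p > 0" and a: "\<alpha> > 0" and g: "\<gamma> \<ge> 0" and T: "T > 0"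
    using assms by auto
  have P: "prob_space M" using sn by (simp add: spectrally_negative_levy_def levy_process_def)
  interpret prob_space M by fact
  have Lm[measurable]: "L t \<in> borel_measurable M" for t
    using sn by (auto simp: spectrally_negative_levy_def levy_process_def)
  define \<theta> where "\<theta> = ruin_time L x"
  have \<theta>m[measurable]: "\<theta> \<in> borel_measurable M"
    unfolding \<theta>_def by (rule ruin_measurable[OF sn])
  have R: "run_int r p a b = p / r * max 0 (disc r a - disc r b)" for a b
    using r p by (rule run_int_closed)
  have stm: "\<tau> \<in> borel_measurable M" if "stopping_time (nat_filtration M L) \<tau>" for \<tau>
    using that by (rule measurable_stopping_time) (use filt_props[OF Lm] in auto)
  define \<Phi> where "\<Phi> s h = ind (s < \<infinity>) * (- run_int r p s h - disc r s * \<gamma> * ind (s < h) + disc r h * \<alpha> * ind (s < h))" for s h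
  define \<Psi> where "\<Psi> s h = - run_int r p s (min h (ennreal T)) - disc r s * \<gamma> * ind (s < min h (ennreal T))
         + disc r h * \<alpha> * ind (s < h \<and> h < ennreal T)" for s h
  define J where "J \<tau> = (\<integral>\<omega>. \<Phi> (\<tau> \<omega>) (\<theta> \<omega>) \<partial>M)" for \<tau> :: "'a \<Rightarrow> ennreal"
  define Jb where "Jb \<tau> = (\<integral>\<omega>. \<Psi> (\<tau> \<omega>) (\<theta> \<omega>) \<partial>M)" for \<tau> :: "'a \<Rightarrow> ennreal"
  define S where "S = stop_set M L x"
  define ST where "ST = stop_set_T M L x T"
  have u: "u_val M L r p \<gamma> \<alpha> x = (SUP \<tau>\<in>S. J \<tau>)"
    by (simp add: u_val_def J_def \<Phi>_def \<theta>_def S_def)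
  have ub: "u_bar M L r p \<gamma> \<alpha> x T = (SUP \<tau>\<in>ST. Jb \<tau>)"
    by (simp add: u_bar_def Jb_def \<Psi>_def \<theta>_def ST_def)
  define f1 where "f1 \<omega> = ind (\<theta> \<omega> \<ge> ennreal T) * run_int r p (ennreal T) (\<theta> \<omega>)" for \<omega>
  define f2 where "f2 \<omega> = ind (\<theta> \<omega> \<ge> ennreal T) * (run_int r p (ennreal T) (\<theta> \<omega>) + disc r (\<theta> \<omega>) * \<alpha>)" for \<omega>
  define f3 where "f3 \<omega> = ind (\<theta> \<omega> \<ge> ennreal T) * exp (- r * T) * \<gamma>" for \<omega>
  have ut: "u_tilde M L r p \<gamma> \<alpha> x T = (SUP \<tau>\<in>S. J \<tau>) + integral\<^sup>L M f1"
    by (simp add: u_tilde_def u f1_def[abs_def] \<theta>_def)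
  define K where "K = p / r + \<gamma> + \<alpha>"
  have Rb: "0 \<le> run_int r p a b" "run_int r p a b \<le> p / r" for a b
    using run_int_bounds[OF r p] by auto
  have Dg: "0 \<le> disc r a * \<gamma>" "disc r a * \<gamma> \<le> \<gamma>" for a
    using disc_nonneg[of r a] disc_le1[of r a] r g by (auto intro: mult_nonneg_nonneg mult_left_le_one_le)
  have Da: "0 \<le> disc r a * \<alpha>" "disc r a * \<alpha> \<le> \<alpha>" for a
    using disc_nonneg[of r a] disc_le1[of r a] r a by (auto intro: mult_nonneg_nonneg mult_left_le_one_le)
  have \<Phi>b: "\<bar>\<Phi> s h\<bar> \<le> K" for s h
    using Rb[of s h] Dg[of s] Da[of h] by (auto simp: \<Phi>_def ind_def K_def)
  have \<Psi>b: "\<bar>\<Psi> s h\<bar> \<le> K" for s h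
    using Rb[of s "min h (ennreal T)"] Dg[of s] Da[of h] by (auto simp: \<Psi>_def ind_def K_def)
  have \<Phi>m: "(\<lambda>\<omega>. \<Phi> (\<tau> \<omega>) (\<theta> \<omega>)) \<in> borel_measurable M" if [measurable]: "\<tau> \<in> borel_measurable M" for \<tau>
    unfolding \<Phi>_def R by measurable
  have \<Psi>m: "(\<lambda>\<omega>. \<Psi> (\<tau> \<omega>) (\<theta> \<omega>)) \<in> borel_measurable M" if [measurable]: "\<tau> \<in> borel_measurable M" for \<tau>
    unfolding \<Psi>_def R by measurable
  have \<Phi>i: "integrable M (\<lambda>\<omega>. \<Phi> (\<tau> \<omega>) (\<theta> \<omega>))" if "\<tau> \<in> borel_measurable M" for \<tau>
    by (rule bounded_integrable[OF P \<Phi>m[OF that] \<Phi>b])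
  have \<Psi>i: "integrable M (\<lambda>\<omega>. \<Psi> (\<tau> \<omega>) (\<theta> \<omega>))" if "\<tau> \<in> borel_measurable M" for \<tau>
    by (rule bounded_integrable[OF P \<Psi>m[OF that] \<Psi>b])
  have f1i: "integrable M f1"
  proof (rule bounded_integrable[OF P, where B="p / r"])
    show "f1 \<in> borel_measurable M" unfolding f1_def[abs_def] R by measurable
    fix \<omega> show "\<bar>f1 \<omega>\<bar> \<le> p / r" using Rb[of "ennreal T" "\<theta> \<omega>"] r p by (auto simp: f1_def ind_def)
  qed
  have f2i: "integrable M f2"
  proof (rule bounded_integrable[OF P, where B="p / r + \<alpha>"])
    show "f2 \<in> borel_measurable M" unfolding f2_def[abs_def] R by measurable
    fix \<omega> show "\<bar>f2 \<omega>\<bar> \<le> p / r + \<alpha>" using Rb[of "ennreal T" "\<theta> \<omega>"] Da[of "\<theta> \<omega>"] r p a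
      by (auto simp: f2_def ind_def intro!: add_mono)
  qed
  have f3i: "integrable M f3"
  proof (rule bounded_integrable[OF P, where B="exp (- r * T) * \<gamma>"])
    show "f3 \<in> borel_measurable M" unfolding f3_def[abs_def] by measurable
    fix \<omega> show "\<bar>f3 \<omega>\<bar> \<le> exp (- r * T) * \<gamma>" using g by (auto simp: f3_def ind_def)
  qed
  have Jle: "J \<tau> \<le> K" if "\<tau> \<in> borel_measurable M" for \<tau>
    unfolding J_def by (rule integral_le_bound[OF P \<Phi>i[OF that]]) (use \<Phi>b in \<open>auto simp: abs_le_iff\<close>)
  have Jble: "Jb \<tau> \<le> K" if "\<tau> \<in> borel_measurable M" for \<tau>
    unfolding Jb_def by (rule integral_le_bound[OF P \<Psi>i[OF that]]) (use \<Psi>b in \<open>auto simp: abs_le_iff\<close>)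
  have Sm: "\<tau> \<in> borel_measurable M" if "\<tau> \<in> S" for \<tau>
    using that stm by (auto simp: S_def stop_set_def)
  have STm: "\<tau> \<in> borel_measurable M" if "\<tau> \<in> ST" for \<tau>
    using that stm by (auto simp: ST_def stop_set_T_def)
  have bddS: "bdd_above (J ` S)" using Jle Sm by (auto intro!: bdd_aboveI[where M=K])
  have bddST: "bdd_above (Jb ` ST)" using Jble STm by (auto intro!: bdd_aboveI[where M=K])
  have S0: "(\<lambda>_. 0) \<in> S" by (auto simp: S_def stop_set_def stopping_time_const)
  have ST0: "(\<lambda>_. 0) \<in> ST" by (auto simp: ST_def stop_set_T_def stopping_time_const)
  have part1: "(SUP \<tau>\<in>S. J \<tau>) \<le> (SUP \<tau>\<in>ST. Jb \<tau>) - integral\<^sup>L M f1 + integral\<^sup>L M f2"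
  proof (rule cSUP_least)
    show "S \<noteq> {}" using S0 by blast
    fix \<tau> assume \<tau>: "\<tau> \<in> S"
    have \<tau>m[measurable]: "\<tau> \<in> borel_measurable M" using Sm[OF \<tau>] .
    have \<tau>st: "stopping_time (nat_filtration M L) \<tau>" and \<tau>ae: "AE \<omega> in M. \<tau> \<omega> \<le> \<theta> \<omega>"
      using \<tau> by (auto simp: S_def stop_set_def \<theta>_def)
    define \<sigma> where "\<sigma> \<omega> = min (\<tau> \<omega>) (ennreal T)" for \<omega>
    have \<sigma>ST: "\<sigma> \<in> ST"
      unfolding ST_def stop_set_T_def \<sigma>_def
      using \<tau>st \<tau>ae by (auto simp: \<theta>_def min_le_iff_disj intro!: stopping_time_min stopping_time_const elim!: eventually_mono)
    have "J \<tau> + integral\<^sup>L M f1 - integral\<^sup>L M f2 = (\<integral>\<omega>. \<Phi> (\<tau> \<omega>) (\<theta> \<omega>) + f1 \<omega> - f2 \<omega> \<partial>M)"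
      using \<Phi>i[OF \<tau>m] f1i f2i by (simp add: J_def)
    also have "\<dots> \<le> Jb \<sigma>"
      unfolding Jb_def
    proof (rule integral_mono_AE)
      show "integrable M (\<lambda>\<omega>. \<Phi> (\<tau> \<omega>) (\<theta> \<omega>) + f1 \<omega> - f2 \<omega>)"
        using \<Phi>i[OF \<tau>m] f1i f2i by auto
      show "integrable M (\<lambda>\<omega>. \<Psi> (\<sigma> \<omega>) (\<theta> \<omega>))"
        by (rule \<Psi>i) (simp add: \<sigma>_def)
      show "AE \<omega> in M. \<Phi> (\<tau> \<omega>) (\<theta> \<omega>) + f1 \<omega> - f2 \<omega> \<le> \<Psi> (\<sigma> \<omega>) (\<theta> \<omega>)"
        using \<tau>ae
      proof (rule eventually_mono)
        fix \<omega> assume "\<tau> \<omega> \<le> \<theta> \<omega>"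
        from ptA[OF r p a g this, of T]
        show "\<Phi> (\<tau> \<omega>) (\<theta> \<omega>) + f1 \<omega> - f2 \<omega> \<le> \<Psi> (\<sigma> \<omega>) (\<theta> \<omega>)"
          by (simp add: \<Phi>_def \<Psi>_def f1_def f2_def \<sigma>_def algebra_simps)
      qed
    qed
    also have "\<dots> \<le> (SUP \<tau>\<in>ST. Jb \<tau>)"
      by (rule cSUP_upper[OF \<sigma>ST bddST])
    finally show "J \<tau> \<le> (SUP \<tau>\<in>ST. Jb \<tau>) - integral\<^sup>L M f1 + integral\<^sup>L M f2" by simp
  qed
  have part2: "(SUP \<tau>\<in>ST. Jb \<tau>) \<le> (SUP \<tau>\<in>S. J \<tau>) + integral\<^sup>L M f1 + integral\<^sup>L M f3"
  proof (rule cSUP_least)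
    show "ST \<noteq> {}" using ST0 by blast
    fix \<tau> assume \<tau>: "\<tau> \<in> ST"
    have \<tau>m[measurable]: "\<tau> \<in> borel_measurable M" using STm[OF \<tau>] .
    have \<tau>st: "stopping_time (nat_filtration M L) \<tau>" and \<tau>ae: "AE \<omega> in M. \<tau> \<omega> \<le> min (\<theta> \<omega>) (ennreal T)"
      using \<tau> by (auto simp: ST_def stop_set_T_def \<theta>_def)
    have \<tau>S: "\<tau> \<in> S"
      unfolding S_def stop_set_def using \<tau>st \<tau>ae by (auto simp: \<theta>_def elim!: eventually_mono)
    have "Jb \<tau> \<le> (\<integral>\<omega>. \<Phi> (\<tau> \<omega>) (\<theta> \<omega>) + f1 \<omega> + f3 \<omega> \<partial>M)"
      unfolding Jb_def
    proof (rule integral_mono_AE)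
      show "integrable M (\<lambda>\<omega>. \<Phi> (\<tau> \<omega>) (\<theta> \<omega>) + f1 \<omega> + f3 \<omega>)"
        using \<Phi>i[OF \<tau>m] f1i f3i by auto
      show "integrable M (\<lambda>\<omega>. \<Psi> (\<tau> \<omega>) (\<theta> \<omega>))"
        by (rule \<Psi>i[OF \<tau>m])
      show "AE \<omega> in M. \<Psi> (\<tau> \<omega>) (\<theta> \<omega>) \<le> \<Phi> (\<tau> \<omega>) (\<theta> \<omega>) + f1 \<omega> + f3 \<omega>"
        using \<tau>ae
      proof (rule eventually_mono)
        fix \<omega> assume "\<tau> \<omega> \<le> min (\<theta> \<omega>) (ennreal T)"
        then have "\<tau> \<omega> \<le> \<theta> \<omega>" "\<tau> \<omega> \<le> ennreal T" by auto
        from ptB[OF r p a g this T]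
        show "\<Psi> (\<tau> \<omega>) (\<theta> \<omega>) \<le> \<Phi> (\<tau> \<omega>) (\<theta> \<omega>) + f1 \<omega> + f3 \<omega>"
          by (simp add: \<Phi>_def \<Psi>_def f1_def f3_def)
      qed
    qed
    also have "\<dots> = J \<tau> + integral\<^sup>L M f1 + integral\<^sup>L M f3"
      using \<Phi>i[OF \<tau>m] f1i f3i by (simp add: J_def)
    also have "J \<tau> \<le> (SUP \<tau>\<in>S. J \<tau>)"
      by (rule cSUP_upper[OF \<tau>S bddS])
    finally show "Jb \<tau> \<le> (SUP \<tau>\<in>S. J \<tau>) + integral\<^sup>L M f1 + integral\<^sup>L M f3" by simp
  qed
  show ?thesis
    using part1 part2 unfolding ut ub by (simp add: f2_def[abs_def] f3_def[abs_def] \<theta>_def)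
qed

end
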